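(* Let $g:\Sigma^n\to\Sigma$ be an $n$-quasigroup, write $\Sigma=\{a,b,c,d\}$, and let $k$ be the first canonical parameter of the double-MDS-code $S=\{\bar x\in\Sigma^n:g(\bar x)\in\{a,b\}\}$. (a) If $1<k<n$, then $g$ is reducible. (b) If $k=n$, then $g$ is semilinear.
   Context: Let $\Sigma=\{0,1,2,3\}$, $[n]=\{1,\ldots,n\}$. An $i$-line of $\Sigma^n$ is a set of the four words that agree in all coordinates except the $i$th; a line is an $i$-line for some $i$. An $(n,2)_4$ MDS code is a set meeting every line in exactly one element. A double-code is a set meeting every line in $0$ or $2$ elements; a double-MDS-code is a set meeting every line in exactly $2$ elements; a double-code is complementable if contained in a double-MDS-code, and prime if complementable, nonempty and not partitionable into two or more nonempty double-codes. An $n$-quasigroup is a map $g:\Sigma^n\to\Sigma$ such that, for each $i$ and each fixing of the other arguments, $x_i\mapsto g(\bar x)$ is a bijection of $\Sigma$. $\chi_S$ denotes the characteristic function, $\oplus$ addition mod 2, and for $K=\{i_1<\cdots<i_m\}\subseteq[n]$, $\bar x_K=(x_{i_1},\ldots,x_{i_m})$. Canonical parameters: every double-MDS-code $S\subseteq\Sigma^n$ has a unique representation $\chi_S(\bar x)=\bigoplus_{j=1}^k\chi_{S_j}(\bar x_{K_j})\oplus\sigma_0$ with $k\in[n]$, $\{K_1,\ldots,K_k\}$ a partition of $[n]$ into nonempty sets, $S_j$ prime double-MDS-codes containing $\bar 0$, $\sigma_0\in\{0,1\}$. An $n$-quasigroup $g$ is reducible if there exist $k'$ with $2\le k'\le n-1$,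 a partition $\{L_1,\ldots,L_{k'}\}$ of $[n]$ into nonempty sets, a $k'$-quasigroup $f_0$ and $|L_j|$-quasigroups $f_j$ with $g(\bar x)=f_0(f_1(\bar x_{L_1}),\ldots,f_{k'}(\bar x_{L_{k'}}))$ (i.e. $g$ is a superposition of quasigroups of arity less than $n$). A double-MDS-code $D\subseteq\Sigma^m$ is linear if $\chi_D(y_1,\ldots,y_m)=\chi_1(y_1)\oplus\cdots\oplus\chi_m(y_m)$ for some $\chi_i:\Sigma\to\{0,1\}$; an MDS code is semilinear if contained in a linear double-MDS-code; an $n$-quasigroup $g$ is semilinear if the MDS code $\{(\bar x,g(\bar x)):\bar x\in\Sigma^n\}\subseteq\Sigma^{n+1}$ is semilinear. *)

theory Defs
  imports Main
begin

text \<open>Conventions: \<Sigma> = {0,1,2,3} (naturals < 4); words of \<Sigma>^n are lists of length n;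
  coordinate i of [n] corresponds to list index i-1.  For K a set of indices,
  nths x K is the subword x_K (entries in increasing index order).\<close>

definition words :: "nat \<Rightarrow> nat list set" where
  "words n = {x. length x = n \<and> set x \<subseteq> {0..<4}}"

definition line :: "nat list \<Rightarrow> nat \<Rightarrow> nat list set" where
  "line x i = {x[i := a] | a. a < 4}"

definition MDS_code :: "nat \<Rightarrow> nat list set \<Rightarrow> bool" where
  "MDS_code n C \<longleftrightarrow> C \<subseteq> words n \<and>
     (\<forall>x\<in>words n. \<forall>i<n. card (C \<inter> line x i) = 1)"

definition double_code :: "nat \<Rightarrow> nat list set \<Rightarrow> bool" where
  "double_code n D \<longleftrightarrow> D \<subseteq> words n \<and>
     (\<forall>x\<in>words n. \<forall>i<n. card (D \<inter> line x i) \<in> {0, 2})"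

definition double_MDS_code :: "nat \<Rightarrow> nat list set \<Rightarrow> bool" where
  "double_MDS_code n D \<longleftrightarrow> D \<subseteq> words n \<and>
     (\<forall>x\<in>words n. \<forall>i<n. card (D \<inter> line x i) = 2)"

definition complementable :: "nat \<Rightarrow> nat list set \<Rightarrow> bool" where
  "complementable n D \<longleftrightarrow> double_code n D \<and> (\<exists>E. double_MDS_code n E \<and> D \<subseteq> E)"

definition prime_code :: "nat \<Rightarrow> nat list set \<Rightarrow> bool" where
  "prime_code n D \<longleftrightarrow> complementable n D \<and> D \<noteq> {} \<and>
     \<not> (\<exists>P. (\<forall>A\<in>P. A \<noteq> {} \<and> double_code n A) \<and> pairwise disjnt P \<and>
            \<Union>P = D \<and> 2 \<le> card P)"

definition quasigroup :: "nat \<Rightarrow> (nat list \<Rightarrow> nat) \<Rightarrow> bool" where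
  "quasigroup n g \<longleftrightarrow> (\<forall>x\<in>words n. g x < 4) \<and>
     (\<forall>x\<in>words n. \<forall>i<n. bij_betw (\<lambda>a. g (x[i := a])) {0..<4} {0..<4})"

definition index_partition :: "nat \<Rightarrow> nat \<Rightarrow> (nat \<Rightarrow> nat set) \<Rightarrow> bool" where
  "index_partition n k K \<longleftrightarrow> (\<forall>j<k. K j \<noteq> {}) \<and>
     (\<forall>j<k. \<forall>j'<k. j \<noteq> j' \<longrightarrow> K j \<inter> K j' = {}) \<and>
     (\<Union>j<k. K j) = {..<n}"

definition canonical_first_param :: "nat \<Rightarrow> nat list set \<Rightarrow> nat \<Rightarrow> bool" where
  "canonical_first_param n S k \<longleftrightarrow> double_MDS_code n S \<and> 1 \<le> k \<and> k \<le> n \<and>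
     (\<exists>K SS (\<sigma>0::nat). index_partition n k K \<and>
        (\<forall>j<k. prime_code (card (K j)) (SS j) \<and> double_MDS_code (card (K j)) (SS j) \<and>
               replicate (card (K j)) 0 \<in> SS j) \<and>
        \<sigma>0 \<le> 1 \<and>
        (\<forall>x\<in>words n. (if x \<in> S then 1 else 0) =
            ((\<Sum>j<k. if nths x (K j) \<in> SS j then 1 else 0) + \<sigma>0) mod (2::nat)))"

definition reducible :: "nat \<Rightarrow> (nat list \<Rightarrow> nat) \<Rightarrow> bool" where
  "reducible n g \<longleftrightarrow> (\<exists>k' L f0 f. 2 \<le> k' \<and> k' \<le> n - 1 \<and> index_partition n k' L \<and>
     quasigroup k' f0 \<and> (\<forall>j<k'. quasigroup (card (L j)) (f j)) \<and>
     (\<forall>x\<in>words n. g x = f0 (map (\<lambda>j. f j (nths x (L j))) [0..<k'])))"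

definition linear_double_MDS :: "nat \<Rightarrow> nat list set \<Rightarrow> bool" where
  "linear_double_MDS m D \<longleftrightarrow> double_MDS_code m D \<and>
     (\<exists>\<chi> :: nat \<Rightarrow> nat \<Rightarrow> bool. \<forall>y\<in>words m.
        (y \<in> D) \<longleftrightarrow> odd (card {i. i < m \<and> \<chi> i (y ! i)}))"

definition semilinear_code :: "nat \<Rightarrow> nat list set \<Rightarrow> bool" where
  "semilinear_code m M \<longleftrightarrow> MDS_code m M \<and> (\<exists>D. linear_double_MDS m D \<and> M \<subseteq> D)"

definition semilinear :: "nat \<Rightarrow> (nat list \<Rightarrow> nat) \<Rightarrow> bool" where
  "semilinear n g \<longleftrightarrow> semilinear_code (n + 1) {x @ [g x] | x. x \<in> words n}"

end

theory Submission
  imports Defs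
begin

lemma words_upd: "x \<in> words m \<Longrightarrow> a < 4 \<Longrightarrow> x[i:=a] \<in> words m"
  unfolding words_def by (auto dest: set_update_subset_insert[THEN subsetD])

lemma words_nth: "x \<in> words m \<Longrightarrow> i < m \<Longrightarrow> x ! i < 4"
  unfolding words_def using nth_mem by fastforce

lemma words_len: "x \<in> words m \<Longrightarrow> length x = m"
  unfolding words_def by auto

lemma card_line: assumes "x \<in> words m" "i < m"
  shows "card (C \<inter> line x i) = card {a. a < 4 \<and> x[i:=a] \<in> C}"
proof -
  have "C \<inter> line x i = (\<lambda>a. x[i:=a]) ` {a. a < 4 \<and> x[i:=a] \<in> C}"
    unfolding line_def by auto
  moreover have "inj_on (\<lambda>a. x[i:=a]) {a. a < 4 \<and> x[i:=a] \<in> C}"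
  proof (rule inj_onI)
    fix u v assume "x[i:=u] = x[i:=v]"
    then have "x[i:=u] ! i = x[i:=v] ! i" by simp
    then show "u = v" using assms words_len[OF assms(1)] by simp
  qed
  ultimately show ?thesis by (simp add: card_image)
qed

lemma dc_iff: "double_code m D \<longleftrightarrow> D \<subseteq> words m \<and>
   (\<forall>x\<in>words m. \<forall>i<m. card {a. a < 4 \<and> x[i:=a] \<in> D} \<in> {0,2})"
  unfolding double_code_def using card_line by auto

lemma dmds_iff: "double_MDS_code m D \<longleftrightarrow> D \<subseteq> words m \<and>
   (\<forall>x\<in>words m. \<forall>i<m. card {a. a < 4 \<and> x[i:=a] \<in> D} = 2)"
  unfolding double_MDS_code_def using card_line by auto

lemma mds_iff: "MDS_code m D \<longleftrightarrow> D \<subseteq> words m \<and>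
   (\<forall>x\<in>words m. \<forall>i<m. card {a. a < 4 \<and> x[i:=a] \<in> D} = 1)"
  unfolding MDS_code_def using card_line by auto

lemma two_pt:
  assumes "card {a. a < (4::nat) \<and> P a} = 2" "P u" "P v" "u \<noteq> v" "u < 4" "v < 4" "c < 4"
  shows "P c \<longleftrightarrow> c = u \<or> c = v"
proof -
  have "{u, v} \<subseteq> {a. a < 4 \<and> P a}" using assms by auto
  moreover have "card {u,v} = 2" using assms by simp
  ultimately have "{u, v} = {a. a < 4 \<and> P a}"
    using assms(1) by (intro card_subset_eq) auto
  then show ?thesis using assms by auto
qed

lemma two_ex:
  assumes "card {a. a < (4::nat) \<and> P a} = 2"
  shows "\<exists>u v. u \<noteq> v \<and> u < 4 \<and> v < 4 \<and> P u \<and> P v"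
proof -
  obtain u v where "{a. a < (4::nat) \<and> P a} = {u, v}" "u \<noteq> v"
    using assms by (auto simp: card_2_iff)
  moreover have "u \<in> {a. a < (4::nat) \<and> P a}" "v \<in> {a. a < (4::nat) \<and> P a}"
    using calculation(1) by auto
  ultimately show ?thesis by blast
qed

lemma zero_pt:
  assumes "card {a. a < (4::nat) \<and> P a} = 0" "c < 4" shows "\<not> P c"
  using assms by auto

lemma card_compl4:
  "card {a. a < (4::nat) \<and> \<not> P a} = 4 - card {a. a < (4::nat) \<and> P a}"
proof -
  have "{a. a < (4::nat) \<and> \<not> P a} = {..<4} - {a. a < (4::nat) \<and> P a}" by auto
  then show ?thesis by (simp add: card_Diff_subset subset_eq)
qed

lemma dmds_compl: "double_MDS_code m D \<Longrightarrow> double_MDS_code m (words m - D)"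
  unfolding dmds_iff
proof (intro conjI ballI allI impI)
  fix x i assume D: "D \<subseteq> words m \<and> (\<forall>x\<in>words m. \<forall>i<m. card {a. a < 4 \<and> x[i := a] \<in> D} = 2)"
    and x: "x \<in> words m" and i: "i < m"
  have "{a. a < 4 \<and> x[i := a] \<in> words m - D} = {a. a < 4 \<and> \<not> x[i := a] \<in> D}"
    using words_upd[OF x] by auto
  then show "card {a. a < 4 \<and> x[i := a] \<in> words m - D} = 2"
    using card_compl4[of "\<lambda>a. x[i := a] \<in> D"] D x i by simp
qed auto

lemma dmds_dc: "double_MDS_code m D \<Longrightarrow> double_code m D"
  unfolding dmds_iff dc_iff by auto

lemma nths_as_map: "nths xs A = map ((!) xs) (filter (\<lambda>i. i \<in> A) [0..<length xs])"
proof (induction xs rule: rev_induct)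
  case Nil then show ?case by simp
next
  case (snoc x xs)
  have "map ((!) (xs @ [x])) (filter (\<lambda>i. i \<in> A) [0..<length xs])
      = map ((!) xs) (filter (\<lambda>i. i \<in> A) [0..<length xs])"
    by (auto simp: nth_append)
  then show ?case using snoc by (simp add: nths_append)
qed

definition Ks :: "nat set \<Rightarrow> nat \<Rightarrow> nat list" where
  "Ks K n = filter (\<lambda>q. q \<in> K) [0..<n]"

definition ix :: "nat set \<Rightarrow> nat \<Rightarrow> nat" where
  "ix K p = length (filter (\<lambda>q. q \<in> K) [0..<p])"

definition ins :: "nat set \<Rightarrow> nat list \<Rightarrow> nat list \<Rightarrow> nat list" where
  "ins K x y = map (\<lambda>p. if p \<in> K then y ! ix K p else x ! p) [0..<length x]"

lemma Ks_ix: assumes "p \<in> K" "p < n"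
  shows "ix K p < length (Ks K n) \<and> Ks K n ! ix K p = p"
proof -
  have "[0..<p + (n - p)] = [0..<p] @ [p..<p + (n - p)]"
    by (rule upt_add_eq_append) simp
  moreover have "[p..<n] = p # [Suc p..<n]" using assms by (simp add: upt_conv_Cons)
  ultimately have "[0..<n] = [0..<p] @ p # [Suc p..<n]" using assms by simp
  then have "Ks K n = filter (\<lambda>q. q \<in> K) [0..<p] @ p # filter (\<lambda>q. q \<in> K) [Suc p..<n]"
    using assms unfolding Ks_def by simp
  then show ?thesis unfolding ix_def by (simp add: nth_append)
qed

lemma Ks_set: "set (Ks K n) = K \<inter> {..<n}" unfolding Ks_def by auto

lemma Ks_distinct: "distinct (Ks K n)" unfolding Ks_def by simp

lemma len_Ks: "K \<subseteq> {..<n} \<Longrightarrow> length (Ks K n) = card K"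
proof -
  assume "K \<subseteq> {..<n}"
  then have "K \<inter> {..<n} = K" by blast
  then show ?thesis using distinct_card[OF Ks_distinct, of K n] Ks_set[of K n] by simp
qed

lemma Ks_lt: "j < length (Ks K n) \<Longrightarrow> Ks K n ! j \<in> K \<and> Ks K n ! j < n"
  using Ks_set[of K n] nth_mem by fastforce

lemma ix_Ks: assumes "j < length (Ks K n)" shows "ix K (Ks K n ! j) = j"
proof -
  have a: "Ks K n ! j \<in> K" "Ks K n ! j < n" using Ks_lt[OF assms] by auto
  from Ks_ix[OF a] have "ix K (Ks K n ! j) < length (Ks K n)"
    "Ks K n ! ix K (Ks K n ! j) = Ks K n ! j" by auto
  then show ?thesis using Ks_distinct assms nth_eq_iff_index_eq by blast
qed

lemma nths_Ks: "length x = n \<Longrightarrow> nths x K = map ((!) x) (Ks K n)"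
  unfolding Ks_def by (simp add: nths_as_map)

lemma nths_nth: "length x = n \<Longrightarrow> j < length (Ks K n) \<Longrightarrow> nths x K ! j = x ! (Ks K n ! j)"
  by (simp add: nths_Ks)

lemma nths_len: "length x = n \<Longrightarrow> length (nths x K) = length (Ks K n)"
  by (simp add: nths_Ks)

lemma nths_cong: "length x = length x' \<Longrightarrow> (\<And>p. p \<in> A \<Longrightarrow> p < length x \<Longrightarrow> x ! p = x' ! p)
   \<Longrightarrow> nths x A = nths x' A"
  by (simp add: nths_as_map)

lemma nths_upd_out: "p \<notin> A \<Longrightarrow> nths (x[p:=a]) A = nths x A"
  by (rule nths_cong) (simp, metis nth_list_update_neq)

lemma nths_words: "x \<in> words n \<Longrightarrow> K \<subseteq> {..<n} \<Longrightarrow> nths x K \<in> words (card K)"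
  unfolding words_def
  using nths_len[of x n K] len_Ks[of K n] set_nths_subset[of x K] by auto

lemma ins_len[simp]: "length (ins K x y) = length x" unfolding ins_def by simp

lemma ins_nth: "p < length x \<Longrightarrow> ins K x y ! p = (if p \<in> K then y ! ix K p else x ! p)"
  unfolding ins_def by simp

lemma nths_ins: assumes "length x = n" "length y = length (Ks K n)"
  shows "nths (ins K x y) K = y"
proof -
  have "map ((!) (ins K x y)) (Ks K n) = y"
  proof (rule nth_equalityI)
    fix j assume "j < length (map ((!) (ins K x y)) (Ks K n))"
    then have j: "j < length (Ks K n)" by simp
    then show "map ((!) (ins K x y)) (Ks K n) ! j = y ! j"
      using Ks_lt[OF j] ix_Ks[OF j] assms by (simp add: ins_nth)
  qed (use assms in simp)
  then show ?thesis using assms by (simp add: nths_Ks)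
qed

lemma ins_nths: assumes "length x = n" shows "ins K x (nths x K) = x"
proof (rule nth_equalityI)
  fix p assume "p < length (ins K x (nths x K))"
  then have p: "p < n" using assms by simp
  show "ins K x (nths x K) ! p = x ! p"
  proof (cases "p \<in> K")
    case True
    then show ?thesis using Ks_ix[OF True p] assms p by (simp add: ins_nth nths_nth)
  qed (use p assms in \<open>simp add: ins_nth\<close>)
qed simp

lemma ins_words: assumes "x \<in> words n" "y \<in> words (card K)" "K \<subseteq> {..<n}"
  shows "ins K x y \<in> words n"
proof -
  have lx: "length x = n" using assms words_len by auto
  have ly: "length y = length (Ks K n)" using assms words_len len_Ks by auto
  have "ins K x y ! p < 4" if "p < n" for p
  proof (cases "p \<in> K")
    case True
    then have "ix K p < length y" using Ks_ix[OF True that] ly by simp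
    then show ?thesis using True that lx assms(2) len_Ks[OF assms(3)] ly
      by (simp add: ins_nth words_nth)
  qed (use that lx assms(1) in \<open>simp add: ins_nth words_nth\<close>)
  then have "set (ins K x y) \<subseteq> {0..<4}" using lx
    by (metis atLeastLessThan_iff in_set_conv_nth ins_len subsetI zero_le)
  then show ?thesis using lx unfolding words_def by simp
qed

lemma ins_upd_in: assumes "length x = n" "j < length (Ks K n)" "length y = length (Ks K n)"
  shows "ins K x (y[j:=a]) = (ins K x y)[Ks K n ! j := a]"
proof (rule nth_equalityI)
  fix p assume "p < length (ins K x (y[j := a]))"
  then have p: "p < n" using assms by simp
  have kj: "Ks K n ! j \<in> K" "Ks K n ! j < n" using Ks_lt[OF assms(2)] by auto
  show "ins K x (y[j := a]) ! p = (ins K x y)[Ks K n ! j := a] ! p"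
  proof (cases "p \<in> K")
    case True
    have "ix K p = j \<longleftrightarrow> p = Ks K n ! j"
      using Ks_ix[OF True p] ix_Ks[OF assms(2)] by metis
    then show ?thesis using True p assms kj by (auto simp: ins_nth nth_list_update)
  next
    case False
    then show ?thesis using p assms kj by (auto simp: ins_nth nth_list_update)
  qed
qed (use assms in simp)

lemma ins_upd_out: assumes "p \<notin> K"
  shows "ins K (x[p:=a]) y = (ins K x y)[p := a]"
proof (rule nth_equalityI)
  fix i assume i: "i < length (ins K (x[p := a]) y)"
  show "ins K (x[p := a]) y ! i = (ins K x y)[p := a] ! i"
  proof (cases "i = p")
    case True then show ?thesis using i assms by (simp add: ins_nth)
  next
    case False then show ?thesis using i assms by (simp add: ins_nth nth_list_update_neq)
  qed
qed simp

lemma ins_cong: assumes "length x = length x'" "\<And>p. p < length x \<Longrightarrow> p \<notin> K \<Longrightarrow> x ! p = x' ! p"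
  shows "ins K x y = ins K x' y"
  by (rule nth_equalityI) (use assms in \<open>auto simp: ins_nth\<close>)

lemma ins_out: "p < length x \<Longrightarrow> p \<notin> K \<Longrightarrow> ins K x y ! p = x ! p"
  by (simp add: ins_nth)

definition indecomp :: "nat \<Rightarrow> nat list set \<Rightarrow> bool" where
  "indecomp m D \<longleftrightarrow> (\<forall>A. A \<subseteq> D \<longrightarrow> double_code m A \<longrightarrow> double_code m (D - A) \<longrightarrow> A \<noteq> {} \<longrightarrow> A = D)"

lemma prime_indecomp: assumes "prime_code m D" shows "indecomp m D"
  unfolding indecomp_def
proof (intro allI impI)
  fix A assume A: "A \<subseteq> D" "double_code m A" "double_code m (D - A)" "A \<noteq> {}"
  show "A = D"
  proof (rule ccontr)
    assume "A \<noteq> D"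
    then have ne: "D - A \<noteq> {}" using A by blast
    have neq: "A \<noteq> D - A" using A(4) by blast
    let ?P = "{A, D - A}"
    have c: "card ?P = 2" using neq by simp
    have u: "\<Union>?P = D" using A(1) by blast
    have p: "pairwise disjnt ?P" unfolding pairwise_def disjnt_def by blast
    have "(\<forall>X\<in>?P. X \<noteq> {} \<and> double_code m X)" using A ne by blast
    then have "(\<forall>X\<in>?P. X \<noteq> {} \<and> double_code m X) \<and> pairwise disjnt ?P \<and> \<Union>?P = D \<and> 2 \<le> card ?P"
      using c u p by simp
    then show False using assms unfolding prime_code_def by blast
  qed
qed

lemma pair_share:
  fixes x :: "nat list"
  assumes "card {a. a < (4::nat) \<and> x[i:=a] \<in> C} = 2" "card {a. a < (4::nat) \<and> x[i:=a] \<in> B} \<in> {0,2}"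
    "B \<subseteq> C" "x[i:=u] \<in> B" "u < 4" "x[i:=v] \<in> C" "v < 4"
  shows "x[i:=v] \<in> B"
proof -
  have "u \<in> {a. a < 4 \<and> x[i:=a] \<in> B}" using assms by auto
  moreover have "finite {a. a < (4::nat) \<and> x[i:=a] \<in> B}" by simp
  ultimately have "card {a. a < 4 \<and> x[i:=a] \<in> B} \<noteq> 0" by (simp only: card_0_eq) blast
  then have c2: "card {a. a < 4 \<and> x[i:=a] \<in> B} = 2" using assms(2) by auto
  have "{a. a < 4 \<and> x[i:=a] \<in> B} \<subseteq> {a. a < 4 \<and> x[i:=a] \<in> C}" using assms(3) by auto
  then have "{a. a < 4 \<and> x[i:=a] \<in> B} = {a. a < 4 \<and> x[i:=a] \<in> C}"
    using c2 assms(1) by (intro card_subset_eq) auto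
  then show ?thesis using assms by blast
qed

lemma sub_dc:
  assumes D: "double_code m D" and AD: "A \<subseteq> D"
    and sh: "\<And>x i u v. x \<in> words m \<Longrightarrow> i < m \<Longrightarrow> u < 4 \<Longrightarrow> v < 4 \<Longrightarrow> u \<noteq> v \<Longrightarrow>
              x[i:=u] \<in> D \<Longrightarrow> x[i:=v] \<in> D \<Longrightarrow> x[i:=u] \<in> A \<Longrightarrow> x[i:=v] \<in> A"
  shows "double_code m A \<and> double_code m (D - A)"
proof -
  have DW: "D \<subseteq> words m" using D unfolding dc_iff by auto
  have main: "card {a. a < 4 \<and> x[i:=a] \<in> A} \<in> {0,2} \<and> card {a. a < 4 \<and> x[i:=a] \<in> D - A} \<in> {0,2}"
    if x: "x \<in> words m" and i: "i < m" for x i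
  proof -
    have cD: "card {a. a < 4 \<and> x[i:=a] \<in> D} \<in> {0,2}" using D x i unfolding dc_iff by auto
    show ?thesis
    proof (cases "card {a. a < 4 \<and> x[i:=a] \<in> D} = 0")
      case True
      then have "{a. a < 4 \<and> x[i:=a] \<in> D} = {}" by simp
      then have "{a. a < 4 \<and> x[i:=a] \<in> A} = {}" "{a. a < 4 \<and> x[i:=a] \<in> D - A} = {}" using AD by auto
      then show ?thesis by simp
    next
      case False
      then have c2: "card {a. a < 4 \<and> x[i:=a] \<in> D} = 2" using cD by auto
      obtain u v where uv: "u \<noteq> v" "u < 4" "v < 4" "x[i:=u] \<in> D" "x[i:=v] \<in> D"
        using two_ex[OF c2] by blast
      have iff: "c < 4 \<Longrightarrow> x[i:=c] \<in> D \<longleftrightarrow> c = u \<or> c = v" for c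
        using two_pt[OF c2, of u v c] uv by simp
      have uvA: "x[i:=u] \<in> A \<longleftrightarrow> x[i:=v] \<in> A" using sh[OF x i] uv by metis
      show ?thesis
      proof (cases "x[i:=u] \<in> A")
        case True
        then have "{a. a < 4 \<and> x[i:=a] \<in> A} = {a. a < 4 \<and> x[i:=a] \<in> D}"
          "{a. a < 4 \<and> x[i:=a] \<in> D - A} = {}" using iff uvA AD by auto
        then show ?thesis using c2 by simp
      next
        case False
        then have "{a. a < 4 \<and> x[i:=a] \<in> D - A} = {a. a < 4 \<and> x[i:=a] \<in> D}"
          "{a. a < 4 \<and> x[i:=a] \<in> A} = {}" using iff uvA AD by auto
        then show ?thesis using c2 by simp
      qed
    qed
  qed
  then show ?thesis using AD DW unfolding dc_iff by auto
qed

lemma coloring: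
  assumes D: "double_code m D" and ind: "indecomp m D"
    and two1: "\<And>u v w. u \<in> D \<Longrightarrow> v \<in> D \<Longrightarrow> w \<in> D \<Longrightarrow> c1 u \<noteq> c1 v \<Longrightarrow> c1 w = c1 u \<or> c1 w = c1 v"
    and two2: "\<And>u v w. u \<in> D \<Longrightarrow> v \<in> D \<Longrightarrow> w \<in> D \<Longrightarrow> c2 u \<noteq> c2 v \<Longrightarrow> c2 w = c2 u \<or> c2 w = c2 v"
    and adj1: "\<And>u i a. u \<in> D \<Longrightarrow> i < m \<Longrightarrow> a < 4 \<Longrightarrow> u[i:=a] \<in> D \<Longrightarrow> a \<noteq> u ! i \<Longrightarrow> c1 (u[i:=a]) \<noteq> c1 u"
    and adj2: "\<And>u i a. u \<in> D \<Longrightarrow> i < m \<Longrightarrow> a < 4 \<Longrightarrow> u[i:=a] \<in> D \<Longrightarrow> a \<noteq> u ! i \<Longrightarrow> c2 (u[i:=a]) \<noteq> c2 u"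
    and y0: "y0 \<in> D" and y: "y \<in> D"
  shows "(c1 y0 = c1 y) \<longleftrightarrow> (c2 y0 = c2 y)"
proof -
  have DW: "D \<subseteq> words m" using D unfolding dc_iff by auto
  define A where "A = {z \<in> D. (c1 y0 = c1 z) = (c2 y0 = c2 z)}"
  have "double_code m A \<and> double_code m (D - A)"
  proof (rule sub_dc[OF D])
    show "A \<subseteq> D" unfolding A_def by auto
  next
    fix x i u v assume x: "x \<in> words m" and i: "i < m" and u: "u < 4" and v: "v < 4" and uv: "u \<noteq> v"
      and xu: "x[i:=u] \<in> D" and xv: "x[i:=v] \<in> D" and xuA: "x[i:=u] \<in> A"
    have lx: "length x = m" using x words_len by auto
    have e: "x[i:=v] = (x[i:=u])[i:=v]" by simp
    have ne: "v \<noteq> (x[i:=u]) ! i" using uv lx i by simp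
    have d1: "c1 (x[i:=v]) \<noteq> c1 (x[i:=u])" using adj1[OF xu i v] e ne xv by metis
    have d2: "c2 (x[i:=v]) \<noteq> c2 (x[i:=u])" using adj2[OF xu i v] e ne xv by metis
    have f1: "(c1 y0 = c1 (x[i:=v])) \<longleftrightarrow> \<not> (c1 y0 = c1 (x[i:=u]))"
      using two1[OF xv xu y0 d1] d1 by metis
    have f2: "(c2 y0 = c2 (x[i:=v])) \<longleftrightarrow> \<not> (c2 y0 = c2 (x[i:=u]))"
      using two2[OF xv xu y0 d2] d2 by metis
    show "x[i:=v] \<in> A" using xuA xv f1 f2 unfolding A_def by auto
  qed
  moreover have "A \<noteq> {}" using y0 unfolding A_def by auto
  moreover have "A \<subseteq> D" unfolding A_def by auto
  ultimately have "A = D" using ind unfolding indecomp_def by blast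
  then show ?thesis using y unfolding A_def by auto
qed

lemma compl_indecomp:
  assumes D: "double_MDS_code m D" and ind: "indecomp m D" and m: "0 < m"
  shows "indecomp m (words m - D)"
  unfolding indecomp_def
proof (intro allI impI)
  fix A assume A: "A \<subseteq> words m - D" "double_code m A" "double_code m (words m - D - A)" "A \<noteq> {}"
  define N where "N = words m - D"
  have AN: "A \<subseteq> N" using A N_def by simp
  have DW: "D \<subseteq> words m" using D unfolding dmds_iff by simp
  have cD: "\<And>x i. x \<in> words m \<Longrightarrow> i < m \<Longrightarrow> card {a. a < 4 \<and> x[i:=a] \<in> D} = 2"
    using D unfolding dmds_iff by simp
  have cN: "\<And>x i. x \<in> words m \<Longrightarrow> i < m \<Longrightarrow> card {a. a < 4 \<and> x[i:=a] \<in> N} = 2"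
    using dmds_compl[OF D] unfolding dmds_iff N_def by simp
  have cA: "\<And>x i. x \<in> words m \<Longrightarrow> i < m \<Longrightarrow> card {a. a < 4 \<and> x[i:=a] \<in> A} \<in> {0,2}"
    using A(2) unfolding dc_iff by simp
  have NW: "N \<subseteq> words m" unfolding N_def by auto
  show "A = words m - D"
  proof (rule ccontr)
    assume neq: "A \<noteq> words m - D"
    define T where "T x = (\<exists>a<4. x[0:=a] \<in> A)" for x
    have f1: "T e \<longleftrightarrow> e \<in> A" if e: "e \<in> N" for e
    proof
      assume "T e"
      then obtain a where a: "a < 4" "e[0:=a] \<in> A" unfolding T_def by auto
      have ew: "e \<in> words m" using e NW by auto
      have e0: "e ! 0 < 4" using words_nth[OF ew m] .
      have "e[0:=e!0] \<in> A"
        by (rule pair_share[OF cN[OF ew m] cA[OF ew m] AN a(2) a(1)]) (use e e0 in simp_all)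
      then show "e \<in> A" by simp
    next
      assume "e \<in> A"
      have ew: "e \<in> words m" using e NW by auto
      have e0: "e ! 0 < 4" using words_nth[OF ew m] .
      then show "T e" unfolding T_def using \<open>e \<in> A\<close> by (intro exI[of _ "e!0"]) simp
    qed
    have f2: "T (x[0:=c]) = T x" for x c unfolding T_def by simp
    have f3: "T (x[i:=b]) = T x" if x: "x \<in> D" and i: "i < m" "i \<noteq> 0" and b: "b < 4"
      and xb: "x[i:=b] \<in> D" for x i b
    proof (rule ccontr)
      assume ne: "T (x[i:=b]) \<noteq> T x"
      have xw: "x \<in> words m" using x DW by auto
      have lx: "length x = m" using words_len[OF xw] .
      define P where "P c = T (x[i:=c])" for c
      have xi: "x ! i < 4" using words_nth[OF xw i(1)] .
      have xx: "x[i:=x!i] = x" by simp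
      have bne: "b \<noteq> x ! i" using ne by auto
      have c2D: "card {a. a < 4 \<and> x[i:=a] \<in> D} = 2" using cD[OF xw i(1)] .
      have Diff: "x[i:=c] \<in> D \<longleftrightarrow> c = x!i \<or> c = b" if "c < 4" for c
        using two_pt[OF c2D, of "x!i" b c] xx x xb bne xi b that by simp
      obtain c3 c4 where c34: "c3 \<noteq> c4" "c3 < 4" "c4 < 4" "x[i:=c3] \<in> N" "x[i:=c4] \<in> N"
        using two_ex[OF cN[OF xw i(1)]] by blast
      have Nv: "c = c3 \<or> c = c4" if "c < 4" "x[i:=c] \<in> N" for c
        using two_pt[OF cN[OF xw i(1)], of c3 c4 c] c34 that by simp
      have "x[i:=c3] \<in> A \<longleftrightarrow> x[i:=c4] \<in> A"
        using pair_share[OF cN[OF xw i(1)] cA[OF xw i(1)] AN, of c3 c4]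
              pair_share[OF cN[OF xw i(1)] cA[OF xw i(1)] AN, of c4 c3] c34 by blast
      then have P34: "P c3 = P c4" unfolding P_def using f1 c34 by simp
      have PN: "P c = P c3" if "c < 4" "x[i:=c] \<in> N" for c using Nv[OF that] P34 by auto
      have Pxb: "P (x!i) \<noteq> P b" using ne xx unfolding P_def by simp
      obtain pv where pv: "pv = x!i \<or> pv = b" "P pv \<noteq> P c3" using Pxb by blast
      have pv4: "pv < 4" using pv xi b by auto
      have uniq: "P c \<noteq> P pv" if "c < 4" "c \<noteq> pv" for c
      proof (cases "x[i:=c] \<in> D")
        case True
        then have "c = x!i \<or> c = b" using Diff that by simp
        then show ?thesis using pv that Pxb by auto
      next
        case False
        then have "x[i:=c] \<in> N" unfolding N_def using words_upd[OF xw that(1)] by simp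
        then show ?thesis using PN that pv by simp
      qed
      define p where "p = x[i:=pv]"
      have pw: "p \<in> words m" unfolding p_def using words_upd[OF xw pv4] .
      obtain w1 w2 where w: "w1 \<noteq> w2" "w1 < 4" "w2 < 4" "p[0:=w1] \<in> N" "p[0:=w2] \<in> N"
        using two_ex[OF cN[OF pw m]] by blast
      define q where "q = p[0:=w1]"
      have qN: "q \<in> N" using w q_def by simp
      have qw: "q \<in> words m" using qN NW by auto
      have Tq: "T q = P pv" unfolding q_def p_def P_def using f2 by simp
      have qi: "q ! i = pv" unfolding q_def p_def using i lx by simp
      obtain u1 u2 where uu: "u1 \<noteq> u2" "u1 < 4" "u2 < 4" "q[i:=u1] \<in> N" "q[i:=u2] \<in> N"
        using two_ex[OF cN[OF qw i(1)]] by blast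
      obtain u where u: "u < 4" "u \<noteq> pv" "q[i:=u] \<in> N" using uu by metis
      have qq: "q[i:=q!i] = q" by simp
      have "q[i:=u] \<in> A \<longleftrightarrow> q \<in> A"
        using pair_share[OF cN[OF qw i(1)] cA[OF qw i(1)] AN, of u "q!i"]
              pair_share[OF cN[OF qw i(1)] cA[OF qw i(1)] AN, of "q!i" u]
              u qq qN qi pv4 by auto
      then have "T (q[i:=u]) = T q" using f1 u(3) qN by simp
      moreover have "q[i:=u] = (x[i:=u])[0:=w1]" unfolding q_def p_def
        using i by (simp add: list_update_swap)
      ultimately have "P u = P pv" using Tq f2 unfolding P_def by simp
      then show False using uniq u by blast
    qed
    define D1 where "D1 = {x \<in> D. T x}"
    have "double_code m D1 \<and> double_code m (D - D1)"
    proof (rule sub_dc[OF dmds_dc[OF D]])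
      show "D1 \<subseteq> D" unfolding D1_def by auto
    next
      fix x i u v assume x: "x \<in> words m" and i: "i < m" and u: "u < 4" and v: "v < 4" and uv: "u \<noteq> v"
        and xu: "x[i:=u] \<in> D" and xv: "x[i:=v] \<in> D" and xuA: "x[i:=u] \<in> D1"
      have "T (x[i:=v]) = T (x[i:=u])"
      proof (cases "i = 0")
        case True then show ?thesis using f2 by simp
      next
        case False
        have "T ((x[i:=u])[i:=v]) = T (x[i:=u])" using f3[OF xu i False v] xv by simp
        then show ?thesis by simp
      qed
      then show "x[i:=v] \<in> D1" using xuA xv unfolding D1_def by simp
    qed
    moreover have "D1 \<noteq> {}"
    proof -
      obtain e where e: "e \<in> A" using A(4) by blast
      have eN: "e \<in> N" using e AN by auto
      have ew: "e \<in> words m" using eN NW by auto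
      obtain u1 u2 where uu: "u1 \<noteq> u2" "u1 < 4" "u2 < 4" "e[0:=u1] \<in> D" "e[0:=u2] \<in> D"
        using two_ex[OF cD[OF ew m]] by blast
      have "T (e[0:=u1])" using f2 f1[OF eN] e by simp
      then show ?thesis using uu unfolding D1_def by blast
    qed
    moreover have "D1 \<noteq> D"
    proof -
      obtain e where e: "e \<in> N" "e \<notin> A" using neq AN unfolding N_def by blast
      have ew: "e \<in> words m" using e NW by auto
      obtain u1 u2 where uu: "u1 \<noteq> u2" "u1 < 4" "u2 < 4" "e[0:=u1] \<in> D" "e[0:=u2] \<in> D"
        using two_ex[OF cD[OF ew m]] by blast
      have "\<not> T (e[0:=u1])" using f2 f1[OF e(1)] e by simp
      then show ?thesis using uu unfolding D1_def by blast
    qed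
    moreover have "D1 \<subseteq> D" unfolding D1_def by auto
    ultimately show False using ind unfolding indecomp_def by blast
  qed
qed

lemma tv1: "u \<in> {a,b} \<Longrightarrow> v \<in> {a,b} \<Longrightarrow> w \<in> {a,b} \<Longrightarrow> u \<noteq> v \<Longrightarrow> w = u \<or> w = v"
  by auto
lemma tv2: "(a::nat) < 4 \<Longrightarrow> b < 4 \<Longrightarrow> a \<noteq> b \<Longrightarrow> u < 4 \<Longrightarrow> v < 4 \<Longrightarrow> w < 4 \<Longrightarrow>
  u \<notin> {a,b} \<Longrightarrow> v \<notin> {a,b} \<Longrightarrow> w \<notin> {a,b} \<Longrightarrow> u \<noteq> v \<Longrightarrow> w = u \<or> w = v"
proof -
  assume *: "(a::nat) < 4" "b < 4" "a \<noteq> b" "u < 4" "v < 4" "w < 4" "u \<notin> {a,b}" "v \<notin> {a,b}" "w \<notin> {a,b}" "u \<noteq> v"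
  have "{a,b,u,v} \<subseteq> {..<4}" using * by auto
  then have "card {a,b,u,v} \<le> 4" by (metis card_lessThan card_mono finite_lessThan)
  show "w = u \<or> w = v"
  proof (rule ccontr)
    assume "\<not> (w = u \<or> w = v)"
    then have "{a,b,u,v,w} \<subseteq> {..<4}" "card {a,b,u,v,w} = 5" using * by auto
    then have "card {a,b,u,v,w} \<le> card {..<(4::nat)}" by (intro card_mono) auto
    then show False using \<open>card {a,b,u,v,w} = 5\<close> by simp
  qed
qed

lemma key:
  assumes qg: "quasigroup n g"
    and Kc: "Kc \<subseteq> {..<n}" "card Kc = m" "0 < m"
    and phi: "double_MDS_code m \<phi>" "prime_code m \<phi>"
    and rep: "\<And>x. x \<in> words n \<Longrightarrow> (g x \<in> {a,b}) \<longleftrightarrow> ((nths x Kc \<in> \<phi>) \<longleftrightarrow> Q x)"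
    and Qc: "\<And>x x'. x \<in> words n \<Longrightarrow> x' \<in> words n \<Longrightarrow> (\<And>p. p < n \<Longrightarrow> p \<notin> Kc \<Longrightarrow> x ! p = x' ! p) \<Longrightarrow> Q x = Q x'"
    and ab: "a < 4" "b < 4" "a \<noteq> b"
    and x: "x \<in> words n" and x': "x' \<in> words n" and y: "y \<in> words m" and y': "y' \<in> words m"
  shows "g (ins Kc x y) = g (ins Kc x y') \<longleftrightarrow> g (ins Kc x' y) = g (ins Kc x' y')"
proof -
  have lK: "length (Ks Kc n) = m" using len_Ks[OF Kc(1)] Kc(2) by simp
  have insw: "ins Kc X z \<in> words n" if "X \<in> words n" "z \<in> words m" for X z
    using ins_words[of X n z Kc] that Kc by simp
  have nthsins: "nths (ins Kc X z) Kc = z" if "X \<in> words n" "z \<in> words m" for X z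
    using nths_ins[of X n z Kc] that words_len lK by simp
  have Qins: "Q (ins Kc X z) = Q X" if "X \<in> words n" "z \<in> words m" for X z
    using Qc[OF insw[OF that] that(1)] ins_out[of _ X Kc z] words_len[OF that(1)] by simp
  have mem: "g (ins Kc X z) \<in> {a,b} \<longleftrightarrow> (z \<in> \<phi> \<longleftrightarrow> Q X)" if "X \<in> words n" "z \<in> words m" for X z
    using rep[OF insw[OF that]] nthsins[OF that] Qins[OF that] by simp
  have lt4: "g (ins Kc X z) < 4" if "X \<in> words n" "z \<in> words m" for X z
    using qg insw[OF that] unfolding quasigroup_def by simp
  have adj: "g (ins Kc X (z[i:=c])) \<noteq> g (ins Kc X z)"
    if X: "X \<in> words n" and z: "z \<in> words m" and i: "i < m" and c: "c < 4" and cz: "c \<noteq> z ! i" for X z i c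
  proof -
    define w where "w = ins Kc X z"
    define p where "p = Ks Kc n ! i"
    have ww: "w \<in> words n" unfolding w_def using insw[OF X z] .
    have il: "i < length (Ks Kc n)" using i lK by simp
    have pK: "p \<in> Kc" "p < n" using Ks_lt[OF il] unfolding p_def by auto
    have e1: "ins Kc X (z[i:=c]) = w[p:=c]" unfolding w_def p_def
      using ins_upd_in[of X n i Kc z c] words_len X z il lK by simp
    have wp: "w ! p = z ! i" unfolding w_def p_def
      using ins_nth[of "Ks Kc n ! i" X Kc z] ix_Ks[OF il] Ks_lt[OF il] words_len[OF X] by simp
    have zi: "z ! i < 4" using words_nth[OF z i] .
    have "bij_betw (\<lambda>a. g (w[p:=a])) {0..<4} {0..<4}" using qg ww pK unfolding quasigroup_def by simp
    then have "inj_on (\<lambda>a. g (w[p:=a])) {0..<4}" by (rule bij_betw_imp_inj_on)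
    then have "g (w[p:=c]) \<noteq> g (w[p:=z!i])" using c zi cz by (auto dest: inj_onD)
    moreover have "w[p:=z!i] = w" using wp list_update_id by metis
    ultimately show ?thesis using e1 w_def by simp
  qed
  have col: "(g (ins Kc X y0) = g (ins Kc X z)) \<longleftrightarrow> (g (ins Kc X' y0) = g (ins Kc X' z))"
    if D: "D = \<phi> \<or> D = words m - \<phi>" and X: "X \<in> words n" and X': "X' \<in> words n"
      and y0: "y0 \<in> D" and z: "z \<in> D" for D X X' y0 z
  proof -
    have DW: "D \<subseteq> words m" using D phi(1) unfolding dmds_iff by blast
    have dc: "double_code m D" using D dmds_dc[OF phi(1)] dmds_dc[OF dmds_compl[OF phi(1)]] by blast
    have ind: "indecomp m D" using D prime_indecomp[OF phi(2)]
      compl_indecomp[OF phi(1) prime_indecomp[OF phi(2)] Kc(3)] by blast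
    have samemem: "g (ins Kc Y u) \<in> {a,b} \<longleftrightarrow> g (ins Kc Y v) \<in> {a,b}"
      if "Y \<in> words n" "u \<in> D" "v \<in> D" for Y u v
    proof -
      have uv: "u \<in> \<phi> \<longleftrightarrow> v \<in> \<phi>"
      proof (cases "D = \<phi>")
        case True then show ?thesis using that by simp
      next
        case False then have "D = words m - \<phi>" using D by simp
        then show ?thesis using that by simp
      qed
      have uw: "u \<in> words m" "v \<in> words m" using DW that by auto
      have m1: "g (ins Kc Y u) \<in> {a,b} \<longleftrightarrow> (u \<in> \<phi> \<longleftrightarrow> Q Y)" by (rule mem[OF that(1) uw(1)])
      have m2: "g (ins Kc Y v) \<in> {a,b} \<longleftrightarrow> (v \<in> \<phi> \<longleftrightarrow> Q Y)" by (rule mem[OF that(1) uw(2)])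
      show ?thesis by (simp only: m1 m2 uv)
    qed
    have two: "g (ins Kc Y w) = g (ins Kc Y u) \<or> g (ins Kc Y w) = g (ins Kc Y v)"
      if Y: "Y \<in> words n" and uvw: "u \<in> D" "v \<in> D" "w \<in> D" and ne: "g (ins Kc Y u) \<noteq> g (ins Kc Y v)" for Y u v w
    proof -
      have uw: "u \<in> words m" "v \<in> words m" "w \<in> words m" using DW uvw by auto
      have s1: "g (ins Kc Y v) \<in> {a,b} \<longleftrightarrow> g (ins Kc Y u) \<in> {a,b}"
        using samemem[OF Y uvw(2) uvw(1)] .
      have s2: "g (ins Kc Y w) \<in> {a,b} \<longleftrightarrow> g (ins Kc Y u) \<in> {a,b}"
        using samemem[OF Y uvw(3) uvw(1)] .
      have l: "g (ins Kc Y u) < 4" "g (ins Kc Y v) < 4" "g (ins Kc Y w) < 4"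
        using lt4[OF Y uw(1)] lt4[OF Y uw(2)] lt4[OF Y uw(3)] .
      show ?thesis
      proof (cases "g (ins Kc Y u) \<in> {a,b}")
        case True
        then have "g (ins Kc Y v) \<in> {a,b}" "g (ins Kc Y w) \<in> {a,b}" using s1 s2 by simp_all
        then show ?thesis using tv1[OF True _ _ ne] by blast
      next
        case False
        then have "g (ins Kc Y v) \<notin> {a,b}" "g (ins Kc Y w) \<notin> {a,b}" using s1 s2 by simp_all
        then show ?thesis using tv2[OF ab l False _ _ ne] by blast
      qed
    qed
    show ?thesis
    proof (rule coloring[of m D "\<lambda>z. g (ins Kc X z)" "\<lambda>z. g (ins Kc X' z)", OF dc ind])
      show "y0 \<in> D" "z \<in> D" by fact+
    next
      fix u v w assume "u \<in> D" "v \<in> D" "w \<in> D" "g (ins Kc X u) \<noteq> g (ins Kc X v)"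
      then show "g (ins Kc X w) = g (ins Kc X u) \<or> g (ins Kc X w) = g (ins Kc X v)" using two[OF X] by blast
    next
      fix u v w assume "u \<in> D" "v \<in> D" "w \<in> D" "g (ins Kc X' u) \<noteq> g (ins Kc X' v)"
      then show "g (ins Kc X' w) = g (ins Kc X' u) \<or> g (ins Kc X' w) = g (ins Kc X' v)" using two[OF X'] by blast
    next
      fix u i c assume "u \<in> D" "i < m" "c < 4" "u[i:=c] \<in> D" "c \<noteq> u ! i"
      then show "g (ins Kc X (u[i:=c])) \<noteq> g (ins Kc X u)" using adj[OF X] DW by blast
    next
      fix u i c assume "u \<in> D" "i < m" "c < 4" "u[i:=c] \<in> D" "c \<noteq> u ! i"
      then show "g (ins Kc X' (u[i:=c])) \<noteq> g (ins Kc X' u)" using adj[OF X'] DW by blast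
    qed
  qed
  show ?thesis
  proof (cases "y \<in> \<phi>")
    case True
    show ?thesis
    proof (cases "y' \<in> \<phi>")
      case True
      then show ?thesis using col[of \<phi> x x' y y'] \<open>y \<in> \<phi>\<close> x x' by simp
    next
      case False
      have "g (ins Kc x y) \<noteq> g (ins Kc x y')" using mem[OF x y] mem[OF x y'] True False by auto
      moreover have "g (ins Kc x' y) \<noteq> g (ins Kc x' y')" using mem[OF x' y] mem[OF x' y'] True False by auto
      ultimately show ?thesis by simp
    qed
  next
    case False
    show ?thesis
    proof (cases "y' \<in> \<phi>")
      case True
      have "g (ins Kc x y) \<noteq> g (ins Kc x y')" using mem[OF x y] mem[OF x y'] True False by auto
      moreover have "g (ins Kc x' y) \<noteq> g (ins Kc x' y')" using mem[OF x' y] mem[OF x' y'] True False by auto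
      ultimately show ?thesis by simp
    next
      case F2: False
      then show ?thesis using col[of "words m - \<phi>" x x' y y'] False x x' y y' by simp
    qed
  qed
qed

lemma inj4: assumes "inj_on f {0..<4}" "f ` {0..<4} \<subseteq> {0..<(4::nat)}"
  shows "bij_betw f {0..<(4::nat)} {0..<4}"
proof -
  have "card (f ` {0..<4}) = card {0..<(4::nat)}" using assms(1) by (simp add: card_image)
  then have "f ` {0..<4} = {0..<4}" using assms(2) by (intro card_subset_eq) auto
  then show ?thesis using assms(1) unfolding bij_betw_def by simp
qed

lemma nths_single: assumes "p < length x" shows "nths x {p} = [x ! p]"
proof -
  have l: "length (Ks {p} (length x)) = 1" using len_Ks[of "{p}" "length x"] assms by simp
  have "ix {p} p < length (Ks {p} (length x)) \<and> Ks {p} (length x) ! ix {p} p = p"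
    using Ks_ix[of p "{p}" "length x"] assms by simp
  then have c: "ix {p} p < 1" "Ks {p} (length x) ! ix {p} p = p" using l by auto
  then have "ix {p} p = 0" by simp
  then have "Ks {p} (length x) ! 0 = p" using c(2) by simp
  then have "Ks {p} (length x) = [p]" using l
    by (intro nth_equalityI) auto
  then show ?thesis using nths_Ks[of x "length x" "{p}"] by simp
qed

lemma bij_count1: fixes f :: "nat \<Rightarrow> nat" assumes "bij_betw f {0..<(4::nat)} {0..<4}" "t < 4"
  shows "card {c. c < 4 \<and> f c = t} = 1"
proof -
  have "t \<in> f ` {0..<4}" using assms unfolding bij_betw_def by simp
  then obtain c0 where c0: "c0 < 4" "f c0 = t" by auto
  have "{c. c < 4 \<and> f c = t} = {c0}"
    using c0 assms(1) unfolding bij_betw_def inj_on_def by auto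
  then show ?thesis by simp
qed

lemma qg_surj: assumes "quasigroup m h" "0 < m" "v < 4"
  shows "\<exists>y\<in>words m. h y = v"
proof -
  have y0: "replicate m 0 \<in> words m" unfolding words_def by auto
  have qb: "\<forall>x\<in>words m. \<forall>i<m. bij_betw (\<lambda>a. h (x[i := a])) {0..<4} {0..<4}"
    using assms(1) unfolding quasigroup_def by simp
  have "bij_betw (\<lambda>a. h ((replicate m 0)[0:=a])) {0..<4} {0..<4}"
    using qb y0 assms(2) by blast
  then have "v \<in> (\<lambda>a. h ((replicate m 0)[0:=a])) ` {0..<4}"
    using assms(3) unfolding bij_betw_def by simp
  then obtain c where "c < 4" "h ((replicate m 0)[0:=c]) = v" by auto
  then show ?thesis using words_upd[OF y0] by blast
qed

lemma ip_ne: "index_partition n k K \<Longrightarrow> j < k \<Longrightarrow> K j \<noteq> {}"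
  unfolding index_partition_def by (elim conjE) simp

lemma ip_disj: "index_partition n k K \<Longrightarrow> j < k \<Longrightarrow> j' < k \<Longrightarrow> j \<noteq> j' \<Longrightarrow> K j \<inter> K j' = {}"
  unfolding index_partition_def by (elim conjE) simp

lemma ip_un: "index_partition n k K \<Longrightarrow> (\<Union>j<k. K j) = {..<n}"
  unfolding index_partition_def by (elim conjE) simp

lemma ip_sub: "index_partition n k K \<Longrightarrow> j < k \<Longrightarrow> K j \<subseteq> {..<n}"
  using ip_un[of n k K] by blast

lemma ip_card_sum: assumes "index_partition n k K" shows "(\<Sum>j<k. card (K j)) = n"
proof -
  have f: "\<forall>j\<in>{..<k}. finite (K j)" using ip_sub[OF assms] finite_subset by blast
  have d: "\<forall>i\<in>{..<k}. \<forall>j\<in>{..<k}. i \<noteq> j \<longrightarrow> K i \<inter> K j = {}" using ip_disj[OF assms] by blast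
  have "card (\<Union>(K ` {..<k})) = (\<Sum>j<k. card (K j))" using card_UN_disjoint[OF _ f d] by simp
  moreover have "\<Union>(K ` {..<k}) = {..<n}" using ip_un[OF assms] by simp
  ultimately show ?thesis by simp
qed

lemma ip_card_pos: assumes "index_partition n k K" "j < k" shows "1 \<le> card (K j)"
proof -
  have "finite (K j)" using ip_sub[OF assms] finite_subset by blast
  moreover have "K j \<noteq> {}" using ip_ne[OF assms] .
  ultimately show ?thesis by (simp add: Suc_le_eq card_gt_0_iff)
qed

lemma partA:
  fixes g :: "nat list \<Rightarrow> nat" and n k a b :: nat and K :: "nat \<Rightarrow> nat set" and \<sigma>0 :: nat
  assumes qg: "quasigroup n g" and ab: "a < 4" "b < 4" "a \<noteq> b"
    and ip: "index_partition n k K"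
    and SSp: "\<And>j. j < k \<Longrightarrow> prime_code (card (K j)) (SS j) \<and> double_MDS_code (card (K j)) (SS j)"
    and rep: "\<And>x. x \<in> words n \<Longrightarrow> (g x \<in> {a,b}) \<longleftrightarrow> odd ((\<Sum>j<k. if nths x (K j) \<in> SS j then 1 else 0) + \<sigma>0)"
    and k: "1 < k" "k < n"
  shows "reducible n g"
proof -
  have qv: "\<And>x. x \<in> words n \<Longrightarrow> g x < 4" using qg unfolding quasigroup_def by simp
  have qb: "\<And>x i. x \<in> words n \<Longrightarrow> i < n \<Longrightarrow> bij_betw (\<lambda>a. g (x[i := a])) {0..<4} {0..<4}"
    using qg unfolding quasigroup_def by simp
  obtain j0 where j0: "j0 < k" "2 \<le> card (K j0)"
  proof (rule ccontr)
    assume "\<not> thesis"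
    have le1: "\<forall>j<k. card (K j) \<le> 1"
    proof (intro allI impI)
      fix j assume j: "j < k"
      show "card (K j) \<le> 1"
      proof (rule ccontr)
        assume "\<not> card (K j) \<le> 1"
        then have "2 \<le> card (K j)" by simp
        then show False using that[OF j] \<open>\<not> thesis\<close> by simp
      qed
    qed
    then have "\<forall>j<k. card (K j) = 1" using ip_card_pos[OF ip] by (meson le_antisym)
    then have "(\<Sum>j<k. card (K j)) = k" by simp
    then show False using ip_card_sum[OF ip] k by simp
  qed
  define Kc where "Kc = K j0"
  define m where "m = card Kc"
  define \<phi> where "\<phi> = SS j0"
  have Kcs: "Kc \<subseteq> {..<n}" unfolding Kc_def using ip_sub[OF ip j0(1)] .
  have m2: "2 \<le> m" unfolding m_def Kc_def using j0 by simp
  have phi: "double_MDS_code m \<phi>" "prime_code m \<phi>" unfolding m_def Kc_def \<phi>_def using SSp[OF j0(1)] by auto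
  define s where "s x = (\<Sum>j\<in>{..<k} - {j0}. if nths x (K j) \<in> SS j then 1 else 0) + \<sigma>0" for x :: "nat list"
  define Q where "Q x = even (s x)" for x
  have rep2: "(g x \<in> {a,b}) \<longleftrightarrow> ((nths x Kc \<in> \<phi>) \<longleftrightarrow> Q x)" if x: "x \<in> words n" for x
  proof -
    have eq: "(\<Sum>j<k. if nths x (K j) \<in> SS j then 1 else 0) =
          (if nths x (K j0) \<in> SS j0 then 1 else 0) + (\<Sum>j\<in>{..<k} - {j0}. if nths x (K j) \<in> SS j then (1::nat) else 0)"
      using j0(1) by (subst sum.remove[of "{..<k}" j0]) auto
    have r: "(g x \<in> {a,b}) \<longleftrightarrow> odd ((\<Sum>j<k. if nths x (K j) \<in> SS j then 1 else 0) + \<sigma>0)" using rep[OF x] .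
    have "(g x \<in> {a,b}) \<longleftrightarrow> odd ((if nths x Kc \<in> \<phi> then 1 else 0) + s x)"
      unfolding s_def Kc_def \<phi>_def using r unfolding eq by (simp only: add.assoc)
    then show ?thesis unfolding Q_def by auto
  qed
  have Qc: "Q x = Q x'" if "x \<in> words n" "x' \<in> words n" and ag: "\<And>p. p < n \<Longrightarrow> p \<notin> Kc \<Longrightarrow> x ! p = x' ! p" for x x'
  proof -
    have "nths x (K j) = nths x' (K j)" if j: "j \<in> {..<k} - {j0}" for j
    proof (rule nths_cong)
      show "length x = length x'" using \<open>x \<in> words n\<close> \<open>x' \<in> words n\<close> words_len by simp
    next
      fix p assume p: "p \<in> K j" "p < length x"
      have "K j \<inter> Kc = {}" unfolding Kc_def using ip_disj[OF ip, of j j0] j j0 by auto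
      then have "p \<notin> Kc" using p by auto
      then show "x ! p = x' ! p" using ag p words_len[OF \<open>x \<in> words n\<close>] by simp
    qed
    then have "s x = s x'" unfolding s_def by (intro arg_cong2[where f="(+)"] sum.cong) auto
    then show ?thesis unfolding Q_def by simp
  qed
  have m0: "0 < m" using m2 by simp
  have KEY: "g (ins Kc x y) = g (ins Kc x y') \<longleftrightarrow> g (ins Kc x' y) = g (ins Kc x' y')"
    if "x \<in> words n" "x' \<in> words n" "y \<in> words m" "y' \<in> words m" for x x' y y'
    by (rule key[OF qg Kcs m_def[symmetric] m0 phi rep2 Qc ab that]) auto
  define L where "L = {..<n} - Kc"
  define cL where "cL = card L"
  have finL: "finite L" unfolding L_def by simp
  have cLm: "cL = n - m" unfolding cL_def L_def m_def using Kcs by (simp add: card_Diff_subset finite_subset)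
  obtain j1 where j1: "j1 < k" "j1 \<noteq> j0" using k(1) j0(1)
    by (metis One_nat_def less_one nat_neq_iff zero_less_Suc less_trans_Suc Suc_lessI)
  have "K j1 \<noteq> {}" using ip_ne[OF ip j1(1)] .
  moreover have "K j1 \<subseteq> L" unfolding L_def Kc_def using ip_sub[OF ip j1(1)] ip_disj[OF ip j1(1) j0(1) j1(2)] by blast
  ultimately have cL1: "1 \<le> cL" unfolding cL_def using finL
    by (metis One_nat_def Suc_leI card_gt_0_iff subset_empty)
  obtain ll where bl: "bij_betw ll {0..<cL} L" using ex_bij_betw_nat_finite[OF finL] unfolding cL_def by blast
  have lL: "ll j \<in> L" if "j < cL" for j using bl that unfolding bij_betw_def by auto
  have linj: "inj_on ll {0..<cL}" using bl unfolding bij_betw_def by simp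
  define lli where "lli = the_inv_into {0..<cL} ll"
  have li1: "ll (lli p) = p" if "p \<in> L" for p
    unfolding lli_def using f_the_inv_into_f_bij_betw[OF bl] that by simp
  have li2: "lli p < cL" if "p \<in> L" for p
    unfolding lli_def using the_inv_into_into[OF linj, of p "{0..<cL}"] bl that unfolding bij_betw_def by simp
  have li3: "lli (ll j) = j" if "j < cL" for j
    unfolding lli_def using the_inv_into_f_f[OF linj] that by simp
  define k' where "k' = Suc cL"
  define L' where "L' j = (if j = 0 then Kc else {ll (j - 1)})" for j
  define x0 where "x0 = replicate n (0::nat)"
  have x0w: "x0 \<in> words n" unfolding x0_def words_def by auto
  define h where "h y = g (ins Kc x0 y)" for y
  define f :: "nat \<Rightarrow> nat list \<Rightarrow> nat" where "f j = (if j = 0 then h else hd)" for j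
  define build where "build z = map (\<lambda>p. if p \<in> L then z ! lli p else 0) [0..<n]" for z :: "nat list"
  define rp where "rp v = (SOME y. y \<in> words m \<and> h y = v)" for v
  define f0 where "f0 w = g (ins Kc (build (tl w)) (rp (hd w)))" for w
  have lK: "length (Ks Kc n) = m" using len_Ks[OF Kcs] m_def by simp
  have insw: "ins Kc X y \<in> words n" if "X \<in> words n" "y \<in> words m" for X y
    using ins_words[of X n y Kc] that Kcs m_def by simp
  have hq: "quasigroup m h"
    unfolding quasigroup_def
  proof (intro conjI ballI allI impI)
    fix y assume y: "y \<in> words m"
    show "h y < 4" unfolding h_def using qv[OF insw[OF x0w y]] .
  next
    fix y i assume y: "y \<in> words m" and i: "i < m"
    have il: "i < length (Ks Kc n)" using i lK by simp
    have e: "h (y[i:=a]) = g ((ins Kc x0 y)[Ks Kc n ! i := a])" for a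
      unfolding h_def using ins_upd_in[of x0 n i Kc y a] il lK words_len[OF y] x0w words_len by simp
    have "bij_betw (\<lambda>a. g ((ins Kc x0 y)[Ks Kc n ! i := a])) {0..<4} {0..<4}"
      using qb[OF insw[OF x0w y]] Ks_lt[OF il] by simp
    then show "bij_betw (\<lambda>a. h (y[i := a])) {0..<4} {0..<4}" using e by simp
  qed
  have rps: "rp v \<in> words m \<and> h (rp v) = v" if "v < 4" for v
  proof -
    have "\<exists>y. y \<in> words m \<and> h y = v" using qg_surj[OF hq m0 that] by blast
    then show ?thesis unfolding rp_def by (rule someI_ex)
  qed
  have buildw: "build z \<in> words n" if "z \<in> words cL" for z
  proof -
    have "\<forall>p<n. build z ! p < 4"
      using that li2 words_nth unfolding build_def by auto
    then show ?thesis unfolding words_def build_def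
      by (auto simp: in_set_conv_nth)
  qed
  have build_upd: "build (z[j:=c]) = (build z)[ll j := c]" if "j < cL" "length z = cL" for z j c
  proof (rule nth_equalityI)
    show "length (build (z[j := c])) = length ((build z)[ll j := c])" unfolding build_def by simp
  next
    fix p assume "p < length (build (z[j := c]))"
    then have p: "p < n" unfolding build_def by simp
    have lj: "ll j \<in> L" "ll j < n" using lL[OF that(1)] unfolding L_def by auto
    show "build (z[j := c]) ! p = (build z)[ll j := c] ! p"
    proof (cases "p = ll j")
      case True
      then show ?thesis using p lj li3[OF that(1)] that unfolding build_def by simp
    next
      case False
      have "p \<in> L \<Longrightarrow> j \<noteq> lli p" using False li1 by auto
      then show ?thesis using p lj False that unfolding build_def by (auto simp: nth_list_update_neq)
    qed
  qed
  have decomp: "g x = f0 (map (\<lambda>j. f j (nths x (L' j))) [0..<k'])" if x: "x \<in> words n" for x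
  proof -
    define w where "w = map (\<lambda>j. f j (nths x (L' j))) [0..<k']"
    have lx: "length x = n" using words_len[OF x] .
    have up: "[0..<k'] = 0 # map Suc [0..<cL]" unfolding k'_def
      by (subst upt_conv_Cons) (simp_all add: map_Suc_upt)
    have wform: "w = f 0 (nths x (L' 0)) # map (\<lambda>j. f (Suc j) (nths x (L' (Suc j)))) [0..<cL]"
      unfolding w_def up by simp
    have w0: "hd w = h (nths x Kc)" unfolding wform f_def L'_def by simp
    have tlw: "tl w = map (\<lambda>j. x ! ll j) [0..<cL]"
    proof -
      have "tl w = map (\<lambda>j. f (Suc j) (nths x (L' (Suc j)))) [0..<cL]"
        unfolding wform by simp
      also have "\<dots> = map (\<lambda>j. x ! ll j) [0..<cL]"
      proof (rule map_cong[OF refl])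
        fix j assume "j \<in> set [0..<cL]"
        then have "ll j < n" using lL unfolding L_def by auto
        then show "f (Suc j) (nths x (L' (Suc j))) = x ! ll j"
          unfolding f_def L'_def using nths_single[of "ll j" x] lx by simp
      qed
      finally show ?thesis .
    qed
    have bx: "ins Kc (build (tl w)) y = ins Kc x y" for y
    proof (rule ins_cong)
      show "length (build (tl w)) = length x" unfolding build_def using lx by simp
    next
      fix p assume p: "p < length (build (tl w))" "p \<notin> Kc"
      then have pL: "p \<in> L" "p < n" unfolding L_def build_def by auto
      show "build (tl w) ! p = x ! p" unfolding build_def tlw using pL li1 li2 by simp
    qed
    have yw: "nths x Kc \<in> words m" using nths_words[OF x Kcs] m_def by simp
    have hv: "h (nths x Kc) < 4" using hq yw unfolding quasigroup_def by simp
    obtain y' where y': "y' = rp (h (nths x Kc))" by simp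
    have y'p: "y' \<in> words m" "h y' = h (nths x Kc)" using rps[OF hv] y' by auto
    have "f0 w = g (ins Kc x y')" unfolding f0_def w0 bx y' by simp
    also have "\<dots> = g (ins Kc x (nths x Kc))"
      using KEY[OF x0w x y'p(1) yw] y'p(2) unfolding h_def by simp
    also have "\<dots> = g x" using ins_nths[OF lx] by simp
    finally show ?thesis unfolding w_def by simp
  qed
  have f0q: "quasigroup k' f0"
    unfolding quasigroup_def
  proof (intro conjI ballI allI impI)
    fix w assume w: "w \<in> words k'"
    have lw: "length w = Suc cL" using words_len[OF w] k'_def by simp
    then obtain c t where ct: "w = c # t" by (cases w) auto
    have c4: "c < 4" using words_nth[OF w, of 0] ct k'_def by simp
    have tw: "t \<in> words cL" using w ct lw unfolding words_def by auto
    have Xw: "build t \<in> words n" using buildw[OF tw] .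
    show "f0 w < 4" unfolding f0_def using ct qv[OF insw[OF Xw rps[OF c4, THEN conjunct1]]] by simp
  next
    fix w i assume w: "w \<in> words k'" and i: "i < k'"
    have lw: "length w = Suc cL" using words_len[OF w] k'_def by simp
    then obtain c t where ct: "w = c # t" by (cases w) auto
    have c4: "c < 4" using words_nth[OF w, of 0] ct k'_def by simp
    have tw: "t \<in> words cL" using w ct lw unfolding words_def by auto
    have lt: "length t = cL" using words_len[OF tw] .
    have Xw: "build t \<in> words n" using buildw[OF tw] .
    show "bij_betw (\<lambda>a. f0 (w[i := a])) {0..<4} {0..<4}"
    proof (cases i)
      case 0
      have e: "f0 (w[i := v]) = g (ins Kc (build t) (rp v))" for v
        unfolding f0_def using ct 0 by simp
      have inj: "inj_on (\<lambda>v. g (ins Kc (build t) (rp v))) {0..<4}"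
      proof (rule inj_onI)
        fix v v' assume v: "v \<in> {0..<4}" "v' \<in> {0..<4}" and eq: "g (ins Kc (build t) (rp v)) = g (ins Kc (build t) (rp v'))"
        have r: "rp v \<in> words m" "h (rp v) = v" "rp v' \<in> words m" "h (rp v') = v'" using rps v by auto
        have "g (ins Kc x0 (rp v)) = g (ins Kc x0 (rp v'))"
          using KEY[OF x0w Xw r(1) r(3)] eq by simp
        then show "v = v'" using r unfolding h_def by simp
      qed
      have "bij_betw (\<lambda>v. g (ins Kc (build t) (rp v))) {0..<4} {0..<4}"
        by (rule inj4[OF inj]) (use qv insw[OF Xw] rps in auto)
      then show ?thesis using e by simp
    next
      case (Suc j)
      have j: "j < cL" using i Suc k'_def by simp
      define y where "y = rp c"
      have yw: "y \<in> words m" using rps[OF c4] y_def by simp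
      have e: "f0 (w[i := a]) = g ((ins Kc (build t) y)[ll j := a])" for a
      proof -
        have "f0 (w[i := a]) = g (ins Kc (build (t[j:=a])) y)" unfolding f0_def y_def using ct Suc by simp
        also have "\<dots> = g (ins Kc ((build t)[ll j := a]) y)" using build_upd[OF j lt] by simp
        also have "\<dots> = g ((ins Kc (build t) y)[ll j := a])"
          using ins_upd_out[of "ll j" Kc "build t" a y] lL[OF j] unfolding L_def by simp
        finally show ?thesis .
      qed
      have "ll j < n" using lL[OF j] unfolding L_def by simp
      then have "bij_betw (\<lambda>a. g ((ins Kc (build t) y)[ll j := a])) {0..<4} {0..<4}"
        using qb[OF insw[OF Xw yw]] by simp
      then show ?thesis using e by simp
    qed
  qed
  have fq: "quasigroup (card (L' j)) (f j)" if "j < k'" for j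
  proof (cases "j = 0")
    case True
    then show ?thesis using hq unfolding f_def L'_def m_def by simp
  next
    case False
    have "quasigroup 1 hd" unfolding quasigroup_def
    proof (intro conjI ballI allI impI)
      fix x :: "nat list" assume x: "x \<in> words 1"
      then obtain c where "x = [c]" unfolding words_def by (auto simp: length_Suc_conv)
      then show "hd x < 4" using x unfolding words_def by simp
    next
      fix x :: "nat list" and i :: nat assume x: "x \<in> words 1" and i: "i < 1"
      then obtain c where c: "x = [c]" unfolding words_def by (auto simp: length_Suc_conv)
      have "(\<lambda>a. hd (x[i := a])) = (\<lambda>a. a)" using c i by auto
      then show "bij_betw (\<lambda>a. hd (x[i := a])) {0..<4} {0..<4}" by (simp add: bij_betw_id[unfolded id_def])
    qed
    then show ?thesis using False unfolding f_def L'_def by simp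
  qed
  have ipL: "index_partition n k' L'"
    unfolding index_partition_def
  proof (intro conjI allI impI)
    fix j assume "j < k'"
    show "L' j \<noteq> {}" unfolding L'_def Kc_def using ip_ne[OF ip j0(1)] by simp
  next
    fix j j' assume j: "j < k'" and j': "j' < k'" and ne: "j \<noteq> j'"
    show "L' j \<inter> L' j' = {}"
    proof (cases "j = 0")
      case True
      then have "j' \<noteq> 0" using ne by simp
      then show ?thesis using True lL[of "j' - 1"] j' k'_def unfolding L'_def L_def by auto
    next
      case False
      show ?thesis
      proof (cases "j' = 0")
        case True
        then show ?thesis using False lL[of "j - 1"] j k'_def unfolding L'_def L_def by auto
      next
        case F2: False
        have "ll (j - 1) \<noteq> ll (j' - 1)" using linj j j' ne False F2 k'_def
          unfolding inj_on_def by (metis atLeastLessThan_iff diff_Suc_1 less_Suc_eq_0_disj zero_le)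
        then show ?thesis using False F2 unfolding L'_def by simp
      qed
    qed
  next
    show "(\<Union>j<k'. L' j) = {..<n}"
    proof
      show "(\<Union>j<k'. L' j) \<subseteq> {..<n}"
      proof
        fix p assume "p \<in> (\<Union>j<k'. L' j)"
        then obtain j where j: "j < k'" "p \<in> L' j" by blast
        show "p \<in> {..<n}"
        proof (cases "j = 0")
          case True then show ?thesis using j Kcs unfolding L'_def by auto
        next
          case False then show ?thesis using j lL[of "j - 1"] k'_def unfolding L'_def L_def by auto
        qed
      qed
    next
      show "{..<n} \<subseteq> (\<Union>j<k'. L' j)"
      proof
        fix p assume p: "p \<in> {..<n}"
        show "p \<in> (\<Union>j<k'. L' j)"
        proof (cases "p \<in> Kc")
          case True
          then have "p \<in> L' 0" unfolding L'_def by simp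
          then show ?thesis unfolding k'_def by blast
        next
          case False
          then have pL: "p \<in> L" using p unfolding L_def by simp
          then have "p \<in> L' (Suc (lli p))" unfolding L'_def using li1 by simp
          moreover have "Suc (lli p) < k'" using li2[OF pL] k'_def by simp
          ultimately show ?thesis by blast
        qed
      qed
    qed
  qed
  have k'2: "2 \<le> k'" using cL1 k'_def by simp
  have mn: "m \<le> n" unfolding m_def using card_mono[OF _ Kcs] by simp
  have k'n: "k' \<le> n - 1" using cLm m2 k'_def k(2) mn by simp
  show ?thesis unfolding reducible_def
    using k'2 k'n ipL f0q fq decomp by blast
qed

lemma word_split: assumes "y \<in> words (Suc n)"
  shows "\<exists>x t. y = x @ [t] \<and> x \<in> words n \<and> t < 4"
proof -
  have ly: "length y = Suc n" using words_len[OF assms] .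
  then obtain x t where yt: "y = x @ [t]" by (metis length_Suc_conv_rev)
  then have "length x = n" using ly by simp
  moreover have "set y \<subseteq> {0..<4}" using assms unfolding words_def by simp
  ultimately show ?thesis using yt unfolding words_def by auto
qed

lemma app_upd1: "i < length x \<Longrightarrow> (x @ [t])[i:=c] = x[i:=c] @ [t]"
  by (simp add: list_update_append1)

lemma app_upd2: "(x @ [t])[length x := c] = x @ [c]"
  by simp

lemma app_words: "x \<in> words n \<Longrightarrow> t < 4 \<Longrightarrow> x @ [t] \<in> words (Suc n)"
  unfolding words_def by auto

lemma card_ab: "(a::nat) < 4 \<Longrightarrow> b < 4 \<Longrightarrow> a \<noteq> b \<Longrightarrow> card {c. c < (4::nat) \<and> c \<in> {a,b}} = 2"
proof -
  assume "(a::nat) < 4" "b < 4" "a \<noteq> b"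
  then have "{c. c < (4::nat) \<and> c \<in> {a,b}} = {a,b}" by auto
  then show ?thesis using \<open>a \<noteq> b\<close> by simp
qed

lemma card_filter_sum: "card {j. j < (n::nat) \<and> P j} = (\<Sum>j<n. if P j then 1 else (0::nat))"
proof -
  have "card {j. j < n \<and> P j} = card {j \<in> {..<n}. P j}" by (simp add: lessThan_def)
  also have "\<dots> = (\<Sum>j\<in>{j \<in> {..<n}. P j}. 1)" by simp
  also have "\<dots> = (\<Sum>j<n. if P j then 1 else 0)" by (rule sum.inter_filter) simp
  finally show ?thesis .
qed

lemma partB:
  fixes g :: "nat list \<Rightarrow> nat" and n a b :: nat and K :: "nat \<Rightarrow> nat set" and \<sigma>0 :: nat
  assumes qg: "quasigroup n g" and ab: "a < 4" "b < 4" "a \<noteq> b"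
    and ip: "index_partition n n K"
    and rep: "\<And>x. x \<in> words n \<Longrightarrow> (g x \<in> {a,b}) \<longleftrightarrow> odd ((\<Sum>j<n. if nths x (K j) \<in> SS j then 1 else 0) + \<sigma>0)"
    and dS: "double_MDS_code n {x \<in> words n. g x \<in> {a,b}}"
  shows "semilinear n g"
proof -
  have qv: "\<And>x. x \<in> words n \<Longrightarrow> g x < 4" using qg unfolding quasigroup_def by simp
  have qb: "\<And>x i. x \<in> words n \<Longrightarrow> i < n \<Longrightarrow> bij_betw (\<lambda>a. g (x[i := a])) {0..<4} {0..<4}"
    using qg unfolding quasigroup_def by simp
  have card1: "card (K j) = 1" if j: "j < n" for j
  proof (rule ccontr)
    assume "card (K j) \<noteq> 1"
    then have c2: "2 \<le> card (K j)" using ip_card_pos[OF ip j] by simp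
    have "(\<Sum>i\<in>{..<n} - {j}. 1) \<le> (\<Sum>i\<in>{..<n} - {j}. card (K i))"
      using ip_card_pos[OF ip] by (intro sum_mono) auto
    moreover have "(\<Sum>i\<in>{..<n} - {j}. (1::nat)) = n - 1" using j by simp
    moreover have "(\<Sum>i<n. card (K i)) = card (K j) + (\<Sum>i\<in>{..<n} - {j}. card (K i))"
      using j by (subst sum.remove[of "{..<n}" j]) auto
    ultimately have "(\<Sum>i<n. card (K i)) \<ge> n + 1" using c2 j by linarith
    then show False using ip_card_sum[OF ip] by simp
  qed
  define \<pi> where "\<pi> j = the_elem (K j)" for j
  have Kpi: "K j = {\<pi> j}" if "j < n" for j
    using card1[OF that] unfolding \<pi>_def by (metis card_1_singletonE the_elem_eq)
  have pin: "\<pi> j < n" if "j < n" for j using ip_sub[OF ip that] Kpi[OF that] by auto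
  have piinj: "inj_on \<pi> {..<n}"
  proof (rule inj_onI)
    fix i j assume "i \<in> {..<n}" "j \<in> {..<n}" "\<pi> i = \<pi> j"
    then show "i = j" using ip_disj[OF ip, of i j] Kpi by auto
  qed
  have piim: "\<pi> ` {..<n} = {..<n}"
  proof -
    have "(\<Union>j<n. K j) = (\<Union>j<n. {\<pi> j})" using Kpi by simp
    then show ?thesis using ip_un[OF ip] by auto
  qed
  define \<pi>i where "\<pi>i = the_inv_into {..<n} \<pi>"
  have pii: "\<pi>i (\<pi> j) = j" if "j < n" for j unfolding \<pi>i_def using the_inv_into_f_f[OF piinj] that by simp
  define S where "S = {x \<in> words n. g x \<in> {a,b}}"
  define M where "M = {x @ [g x] | x. x \<in> words n}"
  define D where "D = {z @ [s] | z s. z \<in> words n \<and> s < 4 \<and> ((g z \<in> {a,b}) \<longleftrightarrow> s \<in> {a,b})}"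
  define \<chi> where "\<chi> i v = (if i < n then [v] \<in> SS (\<pi>i i) else odd (\<sigma>0 + (if v \<in> {a,b} then 0 else (1::nat))))" for i v
  have memM: "x @ [t] \<in> M \<longleftrightarrow> x \<in> words n \<and> t = g x" for x t unfolding M_def by auto
  have memD: "x @ [t] \<in> D \<longleftrightarrow> x \<in> words n \<and> t < 4 \<and> ((g x \<in> {a,b}) \<longleftrightarrow> t \<in> {a,b})" for x t
    unfolding D_def by auto
  have MW: "M \<subseteq> words (Suc n)" unfolding M_def using app_words qv by auto
  have DW: "D \<subseteq> words (Suc n)" unfolding D_def using app_words by auto
  have mds: "MDS_code (n + 1) M" unfolding mds_iff
  proof (intro conjI ballI allI impI)
    show "M \<subseteq> words (n + 1)" using MW by simp
  next
    fix y i assume y: "y \<in> words (n + 1)" and i: "i < n + 1"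
    obtain x t where xt: "y = x @ [t]" "x \<in> words n" "t < 4" using word_split[of y n] y by auto
    have lx: "length x = n" using words_len[OF xt(2)] .
    show "card {c. c < 4 \<and> y[i := c] \<in> M} = 1"
    proof (cases "i < n")
      case True
      have "{c. c < 4 \<and> y[i := c] \<in> M} = {c. c < 4 \<and> g (x[i:=c]) = t}"
        using xt lx True app_upd1[of i x t] memM words_upd[OF xt(2)] by auto
      then show ?thesis using bij_count1[OF qb[OF xt(2) True] xt(3)] by simp
    next
      case False
      then have "i = length x" using i lx by simp
      then have "{c. c < 4 \<and> y[i := c] \<in> M} = {g x}"
        using xt memM qv[OF xt(2)] by auto
      then show ?thesis by simp
    qed
  qed
  have dmds: "double_MDS_code (n + 1) D" unfolding dmds_iff
  proof (intro conjI ballI allI impI)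
    show "D \<subseteq> words (n + 1)" using DW by simp
  next
    fix y i assume y: "y \<in> words (n + 1)" and i: "i < n + 1"
    obtain x t where xt: "y = x @ [t]" "x \<in> words n" "t < 4" using word_split[of y n] y by auto
    have lx: "length x = n" using words_len[OF xt(2)] .
    show "card {c. c < 4 \<and> y[i := c] \<in> D} = 2"
    proof (cases "i < n")
      case True
      have cS: "card {c. c < 4 \<and> x[i:=c] \<in> S} = 2" using dS xt(2) True unfolding dmds_iff S_def by simp
      have e: "{c. c < 4 \<and> y[i := c] \<in> D} = {c. c < 4 \<and> ((x[i:=c] \<in> S) \<longleftrightarrow> t \<in> {a,b})}"
        using xt lx True app_upd1[of i x t] memD words_upd[OF xt(2)] unfolding S_def by auto
      show ?thesis
      proof (cases "t \<in> {a,b}")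
        case True
        then show ?thesis using e cS by simp
      next
        case False
        then show ?thesis using e cS card_compl4[of "\<lambda>c. x[i:=c] \<in> S"] by simp
      qed
    next
      case False
      then have il: "i = length x" using i lx by simp
      have e: "{c. c < 4 \<and> y[i := c] \<in> D} = {c. c < 4 \<and> ((g x \<in> {a,b}) \<longleftrightarrow> c \<in> {a,b})}"
        using xt il memD by auto
      show ?thesis
      proof (cases "g x \<in> {a,b}")
        case True
        then show ?thesis using e card_ab[OF ab] by simp
      next
        case False
        then show ?thesis using e card_ab[OF ab] card_compl4[of "\<lambda>c. c \<in> {a,b}"] by simp
      qed
    qed
  qed
  have lin: "y \<in> D \<longleftrightarrow> odd (card {i. i < n + 1 \<and> \<chi> i (y ! i)})" if y: "y \<in> words (n + 1)" for y
  proof -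
    obtain x t where xt: "y = x @ [t]" "x \<in> words n" "t < 4" using word_split[of y n] y by auto
    have lx: "length x = n" using words_len[OF xt(2)] .
    define N where "N = card {j. j < n \<and> nths x (K j) \<in> SS j}"
    have "{i. i < n \<and> \<chi> i (y ! i)} = \<pi> ` {j. j < n \<and> nths x (K j) \<in> SS j}"
    proof
      show "{i. i < n \<and> \<chi> i (y ! i)} \<subseteq> \<pi> ` {j. j < n \<and> nths x (K j) \<in> SS j}"
      proof
        fix i assume "i \<in> {i. i < n \<and> \<chi> i (y ! i)}"
        then have i: "i < n" "[x ! i] \<in> SS (\<pi>i i)" using xt lx unfolding \<chi>_def by (auto simp: nth_append)
        obtain j where j: "j < n" "\<pi> j = i" using piim i(1) by (metis imageE lessThan_iff)
        have "nths x (K j) = [x ! i]" using Kpi[OF j(1)] j(2) nths_single[of i x] i lx by simp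
        then have "nths x (K j) \<in> SS j" using i(2) pii[OF j(1)] j(2) by simp
        then show "i \<in> \<pi> ` {j. j < n \<and> nths x (K j) \<in> SS j}" using j by blast
      qed
    next
      show "\<pi> ` {j. j < n \<and> nths x (K j) \<in> SS j} \<subseteq> {i. i < n \<and> \<chi> i (y ! i)}"
      proof
        fix i assume "i \<in> \<pi> ` {j. j < n \<and> nths x (K j) \<in> SS j}"
        then obtain j where j: "j < n" "nths x (K j) \<in> SS j" "i = \<pi> j" by blast
        have il: "i < n" using pin[OF j(1)] j(3) by simp
        have "nths x (K j) = [x ! i]" using Kpi[OF j(1)] j(3) nths_single[of i x] il lx by simp
        then show "i \<in> {i. i < n \<and> \<chi> i (y ! i)}"
          using j il pii[OF j(1)] xt lx unfolding \<chi>_def by (auto simp: nth_append)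
      qed
    qed
    moreover have "inj_on \<pi> {j. j < n \<and> nths x (K j) \<in> SS j}" using piinj by (rule inj_on_subset) auto
    ultimately have c1: "card {i. i < n \<and> \<chi> i (y ! i)} = N" unfolding N_def by (simp add: card_image)
    have yn: "y ! n = t" using xt(1) lx by (metis nth_append_length)
    have "{i. i < n + 1 \<and> \<chi> i (y ! i)} = {i. i < n \<and> \<chi> i (y ! i)} \<union> (if \<chi> n t then {n} else {})"
    proof (cases "\<chi> n t")
      case True
      then show ?thesis using yn by (auto simp: less_Suc_eq)
    next
      case False
      then show ?thesis using yn by (auto simp: less_Suc_eq)
    qed
    then have c2: "card {i. i < n + 1 \<and> \<chi> i (y ! i)} = N + (if \<chi> n t then 1 else 0)"
      using c1 by (simp split: if_splits)
    have gN: "(g x \<in> {a,b}) \<longleftrightarrow> odd (N + \<sigma>0)" using rep[OF xt(2)] card_filter_sum[of n "\<lambda>j. nths x (K j) \<in> SS j"]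
      unfolding N_def by simp
    have "y \<in> D \<longleftrightarrow> ((g x \<in> {a,b}) \<longleftrightarrow> t \<in> {a,b})" using memD xt by simp
    also have "\<dots> \<longleftrightarrow> odd (N + (if \<chi> n t then 1 else 0))" using gN unfolding \<chi>_def by auto
    finally show ?thesis using c2 by simp
  qed
  have MD: "M \<subseteq> D" unfolding M_def D_def using qv by blast
  show ?thesis unfolding semilinear_def semilinear_code_def linear_double_MDS_def
    using mds dmds lin MD unfolding M_def by blast
qed

theorem corollary6:
  fixes g :: "nat list \<Rightarrow> nat" and n k a b :: nat
  assumes "quasigroup n g"
    and "a < 4" and "b < 4" and "a \<noteq> b"
    and "canonical_first_param n {x \<in> words n. g x \<in> {a, b}} k"
  shows "(1 < k \<and> k < n \<longrightarrow> reducible n g) \<and> (k = n \<longrightarrow> semilinear n g)"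
proof -
  define S where "S = {x \<in> words n. g x \<in> {a, b}}"
  have cf: "double_MDS_code n S \<and> 1 \<le> k \<and> k \<le> n \<and>
     (\<exists>K SS (\<sigma>0::nat). index_partition n k K \<and>
        (\<forall>j<k. prime_code (card (K j)) (SS j) \<and> double_MDS_code (card (K j)) (SS j) \<and>
               replicate (card (K j)) 0 \<in> SS j) \<and>
        \<sigma>0 \<le> 1 \<and>
        (\<forall>x\<in>words n. (if x \<in> S then 1 else 0) =
            ((\<Sum>j<k. if nths x (K j) \<in> SS j then 1 else 0) + \<sigma>0) mod (2::nat)))"
    using assms(5) unfolding canonical_first_param_def S_def .
  then obtain K SS and \<sigma>0 :: nat where
    dS: "double_MDS_code n S" and ip: "index_partition n k K"
    and SSp: "\<forall>j<k. prime_code (card (K j)) (SS j) \<and> double_MDS_code (card (K j)) (SS j) \<and>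
               replicate (card (K j)) 0 \<in> SS j"
    and repc: "\<forall>x\<in>words n. (if x \<in> S then 1 else 0) =
            ((\<Sum>j<k. if nths x (K j) \<in> SS j then 1 else 0) + \<sigma>0) mod (2::nat)"
    by blast
  have rep: "(g x \<in> {a,b}) \<longleftrightarrow> odd ((\<Sum>j<k. if nths x (K j) \<in> SS j then 1 else 0) + \<sigma>0)"
    if x: "x \<in> words n" for x
  proof -
    have e: "(if x \<in> S then 1 else 0) = ((\<Sum>j<k. if nths x (K j) \<in> SS j then 1 else 0) + \<sigma>0) mod (2::nat)"
      using repc x by blast
    have "x \<in> S \<longleftrightarrow> g x \<in> {a,b}" unfolding S_def using x by simp
    moreover obtain T where T: "T = (\<Sum>j<k. if nths x (K j) \<in> SS j then 1 else 0) + \<sigma>0" by simp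
    ultimately have "(if g x \<in> {a,b} then 1 else 0) = T mod (2::nat)" using e by simp
    then have "(g x \<in> {a,b}) \<longleftrightarrow> odd T"
      by (cases "g x \<in> {a,b}") (simp_all add: odd_iff_mod_2_eq_one even_iff_mod_2_eq_zero)
    then show ?thesis using T by simp
  qed
  have A: "reducible n g" if "1 < k" "k < n"
    by (rule partA[OF assms(1-4) ip _ rep that]) (use SSp in auto)
  have B: "semilinear n g" if kn: "k = n"
    using partB[OF assms(1-4), of K SS \<sigma>0] ip rep dS kn unfolding S_def by simp
  show ?thesis using A B by blast
qed

end
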